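(* Let $N\ge 3$, $0<p<1$, and let $E_N$ be the minimal cost of a Hamiltonian cycle on $N$ points drawn independently and uniformly in $[0,1]$. Then $$\mathbb E[E_N]=\frac{\Gamma(N+1)}{\Gamma(N+p+1)}\left[(N-1)\,\Gamma(p+1)+\frac{\Gamma(N+p-1)}{\Gamma(N-1)}\right],$$ and consequently $\lim_{N\to\infty}N^{p-1}\,\mathbb E[E_N]=\Gamma(p+1)$.
   Context: For points $x_1,\dots,x_N\in[0,1]$ forming the vertices of the complete graph $\mathcal K_N$, the weight of the edge $\{x_i,x_j\}$ is $|x_i-x_j|^p$ and the cost of a Hamiltonian cycle is the sum of its edge weights; $E_N$ is the minimum of this cost over all Hamiltonian cycles. *)

theory Defs
  imports "HOL-Probability.Probability"
begin

definition ham_cost :: "nat \<Rightarrow> real \<Rightarrow> (nat \<Rightarrow> nat) \<Rightarrow> (nat \<Rightarrow> real) \<Rightarrow> real" where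
  "ham_cost N p \<sigma> x = (\<Sum>i<N. \<bar>x (\<sigma> i) - x (\<sigma> (Suc i mod N))\<bar> powr p)"

definition E_N :: "nat \<Rightarrow> real \<Rightarrow> (nat \<Rightarrow> real) \<Rightarrow> real" where
  "E_N N p x = Min {ham_cost N p \<sigma> x | \<sigma>. \<sigma> permutes {..<N}}"

definition unif_points :: "nat \<Rightarrow> (nat \<Rightarrow> real) measure" where
  "unif_points N = PiM {..<N} (\<lambda>_. uniform_measure lborel {0..1})"

definition expected_E :: "nat \<Rightarrow> real \<Rightarrow> real" where
  "expected_E N p = (\<integral>x. E_N N p x \<partial>unif_points N)"

end

theory Submission
  imports Defs "HOL-Combinatorics.Permutations" "HOL-Real_Asymp.Real_Asymp"
begin


fun pc :: "real \<Rightarrow> real list \<Rightarrow> real" where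
  "pc p (a # b # r) = \<bar>a - b\<bar> powr p + pc p (b # r)"
| "pc p _ = 0"

definition cc :: "real \<Rightarrow> real list \<Rightarrow> real" where
  "cc p xs = pc p xs + \<bar>last xs - hd xs\<bar> powr p"

lemma pc_snoc: "ys \<noteq> [] \<Longrightarrow> pc p (ys @ [a]) = pc p ys + \<bar>last ys - a\<bar> powr p"
proof (induction ys)
  case (Cons b ys)
  then show ?case by (cases ys) auto
qed simp

lemma pc_nth: "pc p ys = (\<Sum>i<length ys - 1. \<bar>ys!i - ys!(Suc i)\<bar> powr p)"
proof (induction ys)
  case (Cons a r)
  show ?case
  proof (cases r)
    case (Cons b r')
    have "(\<Sum>i<length (a#r) - 1. \<bar>(a#r)!i - (a#r)!(Suc i)\<bar> powr p)
      = \<bar>a - b\<bar> powr p + (\<Sum>i<length r - 1. \<bar>r!i - r!(Suc i)\<bar> powr p)"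
      using Cons by (simp add: sum.lessThan_Suc_shift del: sum.lessThan_Suc)
    then show ?thesis using Cons.IH Cons by simp
  qed simp
qed simp

lemma cc_rotate1: "cc p (rotate1 xs) = cc p xs"
proof (cases xs)
  case Nil then show ?thesis by simp
next
  case (Cons a ys)
  show ?thesis
  proof (cases ys)
    case Nil then show ?thesis using Cons by simp
  next
    case (Cons b zs)
    have "cc p (rotate1 xs) = pc p ys + \<bar>last ys - a\<bar> powr p + \<bar>a - hd ys\<bar> powr p"
      using \<open>xs = a # ys\<close> Cons pc_snoc[of "b#zs" p a] by (simp add: cc_def)
    also have "\<dots> = cc p xs"
      using \<open>xs = a # ys\<close> Cons by (simp add: cc_def abs_minus_commute)
    finally show ?thesis .
  qed
qed

lemma cc_rotate: "cc p (rotate n xs) = cc p xs"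
  by (induction n) (auto simp: cc_rotate1)

lemma ham_cost_cc:
  assumes "N \<ge> 1"
  shows "ham_cost N p \<sigma> x = cc p (map (x \<circ> \<sigma>) [0..<N])"
proof -
  let ?ys = "map (x \<circ> \<sigma>) [0..<N]"
  obtain M where N: "N = Suc M" using assms by (cases N) auto
  have "ham_cost N p \<sigma> x = (\<Sum>i<M. \<bar>x (\<sigma> i) - x (\<sigma> (Suc i mod N))\<bar> powr p)
        + \<bar>x (\<sigma> M) - x (\<sigma> (Suc M mod N))\<bar> powr p"
    by (simp add: ham_cost_def N)
  also have "(\<Sum>i<M. \<bar>x (\<sigma> i) - x (\<sigma> (Suc i mod N))\<bar> powr p) = pc p ?ys"
    unfolding pc_nth by (intro sum.cong) (auto simp: N nth_append mod_Suc, metis Suc_lessI)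
  also have "\<bar>x (\<sigma> M) - x (\<sigma> (Suc M mod N))\<bar> = \<bar>last ?ys - hd ?ys\<bar>"
    by (simp add: N last_map hd_map hd_upt del: upt_Suc)
  finally show ?thesis by (simp add: cc_def comp_def)
qed


lemma conc_step:
  fixes p g s t :: real
  assumes p: "0 < p" "p \<le> 1" and g: "0 \<le> g" "g \<le> s" "s \<le> t"
  shows "t powr p - (t-g) powr p \<le> s powr p - (s-g) powr p"
proof -
  define h where "h y = (y+g) powr p - y powr p" for y
  have "h (t-g) \<le> h (s-g)"
  proof (rule DERIV_nonpos_imp_decreasing_open[of "s-g" "t-g" h])
    show "s - g \<le> t - g" using g by simp
    fix y assume y: "s - g < y" "y < t - g"
    then have y0: "y > 0" using g by simp
    have d1: "DERIV (\<lambda>y. (y+g) powr p) y :> p * (y+g) powr (p - of_nat 1) * 1"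
      using y0 g by (intro DERIV_fun_powr derivative_eq_intros) auto
    have d2: "DERIV (\<lambda>y. y powr p) y :> p * y powr (p - of_nat 1) * 1"
      using y0 g by (intro DERIV_fun_powr derivative_eq_intros) auto
    have "DERIV h y :> p * (y+g) powr (p - of_nat 1) * 1 - p * y powr (p - of_nat 1) * 1"
      unfolding h_def by (rule DERIV_diff[OF d1 d2])
    moreover have "(y+g) powr (p-1) \<le> y powr (p-1)"
      using y0 g p by (intro powr_mono2') auto
    ultimately show "\<exists>d. DERIV h y :> d \<and> d \<le> 0" using p
      by (intro exI[of _ "p * (y+g) powr (p - of_nat 1) * 1 - p * y powr (p - of_nat 1) * 1"]) (auto simp: mult_left_mono)
  next
    show "continuous_on {s - g..t - g} h"
      unfolding h_def using p g by (intro continuous_intros continuous_on_powr') auto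
  qed
  then show ?thesis unfolding h_def by simp
qed

lemma key_ineq:
  fixes p m M mn u v :: real
  assumes p: "0 < p" "p \<le> 1" and h: "mn \<le> u" "u \<le> M" "mn \<le> v" "v \<le> M" "M \<le> m"
  shows "(m - M) powr p + (m - mn) powr p - (M - mn) powr p
         \<le> (m - u) powr p + (m - v) powr p - \<bar>u - v\<bar> powr p"
proof -
  have *: "(m - M) powr p + (m - mn) powr p - (M - mn) powr p
         \<le> (m - u) powr p + (m - v) powr p - (v - u) powr p" if uv: "u \<le> v" "mn \<le> u" "v \<le> M" for u v
  proof -
    define a b g R where "a = m - v" "b = m - u" "g = m - M" "R = m - mn"
    have g0: "0 \<le> g" "g \<le> a" "a \<le> b" "b \<le> R" using uv h unfolding a_b_g_R_def by auto
    have 1: "R powr p - (R-g) powr p \<le> b powr p - (b-g) powr p"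
      using conc_step[OF p, of g b R] g0 by linarith
    have 2: "(b - a) powr p \<le> (b - g) powr p"
      using g0 p by (intro powr_mono2) auto
    have 3: "g powr p \<le> a powr p" using g0 p by (intro powr_mono2) auto
    have "R - g = M - mn" "b - a = v - u" unfolding a_b_g_R_def by auto
    then show ?thesis using 1 2 3 unfolding a_b_g_R_def by simp
  qed
  show ?thesis
  proof (cases "u \<le> v")
    case True then have "\<bar>u - v\<bar> = v - u" by simp
    then show ?thesis using *[of u v] h True by simp
  next
    case False then have "\<bar>u - v\<bar> = u - v" by simp
    then show ?thesis using *[of v u] h False by simp
  qed
qed


definition G :: "real \<Rightarrow> real set \<Rightarrow> real" where
  "G p A = (\<Sum>b\<in>A. \<Sum>a\<in>A. of_bool (a < b \<and> (\<forall>c\<in>A. c \<le> a \<or> b \<le> c)) * (b - a) powr p)"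

definition L :: "real \<Rightarrow> real set \<Rightarrow> real" where
  "L p A = G p A + (Max A - Min A) powr p"

lemma G_insert_max:
  assumes A: "finite A" "A \<noteq> {}" and m: "\<forall>a\<in>A. a < m"
  shows "G p (insert m A) = G p A + (m - Max A) powr p"
proof -
  have mA: "m \<notin> A" using m by auto
  have inner: "(\<Sum>a\<in>insert m A. of_bool (a < b \<and> (\<forall>c\<in>insert m A. c \<le> a \<or> b \<le> c)) * (b - a) powr p)
     = (\<Sum>a\<in>A. of_bool (a < b \<and> (\<forall>c\<in>A. c \<le> a \<or> b \<le> c)) * (b - a) powr p)" if b: "b \<in> A" for b
  proof -
    have "b < m" using m b by auto
    then show ?thesis using A mA
      by (simp add: sum.insert)
  qed
  have top: "(\<Sum>a\<in>insert m A. of_bool (a < m \<and> (\<forall>c\<in>insert m A. c \<le> a \<or> m \<le> c)) * (m - a) powr p)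
     = (m - Max A) powr p"
  proof -
    have "(\<Sum>a\<in>insert m A. of_bool (a < m \<and> (\<forall>c\<in>insert m A. c \<le> a \<or> m \<le> c)) * (m - a) powr p)
       = (\<Sum>a\<in>A. of_bool (a < m \<and> (\<forall>c\<in>insert m A. c \<le> a \<or> m \<le> c)) * (m - a) powr p)"
      by (subst sum.insert[OF A(1) mA]) simp
    also have "\<dots> = (\<Sum>a\<in>A. (if a = Max A then (m - a) powr p else 0))"
    proof (intro sum.cong refl)
      fix a assume a: "a \<in> A"
      have "(\<forall>c\<in>insert m A. c \<le> a \<or> m \<le> c) \<longleftrightarrow> (\<forall>c\<in>A. c \<le> a)"
        using m by force
      also have "\<dots> \<longleftrightarrow> a = Max A"
      proof
        assume "\<forall>c\<in>A. c \<le> a" then show "a = Max A" using A a by (intro Max_eqI[symmetric]) auto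
      next
        assume "a = Max A" then show "\<forall>c\<in>A. c \<le> a" using A by auto
      qed
      finally have "(\<forall>c\<in>insert m A. c \<le> a \<or> m \<le> c) \<longleftrightarrow> a = Max A" .
      then show "of_bool (a < m \<and> (\<forall>c\<in>insert m A. c \<le> a \<or> m \<le> c)) * (m - a) powr p
          = (if a = Max A then (m - a) powr p else 0)" using m a by auto
    qed
    also have "\<dots> = (m - Max A) powr p"
      using A by (simp add: sum.delta')
    finally show ?thesis .
  qed
  have "G p (insert m A) = (\<Sum>a\<in>insert m A. of_bool (a < m \<and> (\<forall>c\<in>insert m A. c \<le> a \<or> m \<le> c)) * (m - a) powr p)
     + (\<Sum>b\<in>A. \<Sum>a\<in>insert m A. of_bool (a < b \<and> (\<forall>c\<in>insert m A. c \<le> a \<or> b \<le> c)) * (b - a) powr p)"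
    unfolding G_def by (rule sum.insert[OF A(1) mA])
  also have "(\<Sum>b\<in>A. \<Sum>a\<in>insert m A. of_bool (a < b \<and> (\<forall>c\<in>insert m A. c \<le> a \<or> b \<le> c)) * (b - a) powr p) = G p A"
    unfolding G_def by (rule sum.cong[OF refl inner])
  finally show ?thesis using top by linarith
qed

lemma L_single: "L p {a} = 0"
  by (simp add: L_def G_def)

lemma cc_single: "cc p [a] = 0"
  by (simp add: cc_def)

lemma cc_snoc:
  assumes "ys \<noteq> []"
  shows "cc p (ys @ [m]) = cc p ys - \<bar>last ys - hd ys\<bar> powr p + \<bar>last ys - m\<bar> powr p + \<bar>m - hd ys\<bar> powr p"
  using assms by (simp add: cc_def pc_snoc)

lemma L_insert_max:
  assumes A: "finite A" "A \<noteq> {}" and m: "\<forall>a\<in>A. a < m"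
  shows "L p (insert m A) = L p A - (Max A - Min A) powr p + (m - Max A) powr p + (m - Min A) powr p"
proof -
  have "Max (insert m A) = m" "Min (insert m A) = Min A"
    using A m by (auto intro!: Max_eqI Min_eqI simp: order_less_imp_le)
  then show ?thesis unfolding L_def using G_insert_max[OF A m] by simp
qed

lemma L_lower:
  assumes p: "0 < p" "p \<le> 1"
  shows "distinct xs \<Longrightarrow> xs \<noteq> [] \<Longrightarrow> L p (set xs) \<le> cc p xs"
proof (induction "length xs" arbitrary: xs rule: less_induct)
  case less
  show ?case
  proof (cases "length xs = 1")
    case True
    then obtain a where "xs = [a]" by (cases xs) auto
    then show ?thesis by (simp add: L_single cc_single)
  next
    case False
    define m where "m = Max (set xs)"
    have "m \<in> set xs" using less.prems unfolding m_def by simp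
    then obtain us vs where xs: "xs = us @ m # vs" by (meson split_list)
    define ys where "ys = vs @ us"
    have rot: "rotate (length (us @ [m])) xs = ys @ [m]"
      unfolding xs ys_def by (metis append.assoc append_Cons append_Nil rotate_append)
    have ccx: "cc p xs = cc p (ys @ [m])" by (metis rot cc_rotate)
    have ys_ne: "ys \<noteq> []" using False xs ys_def by auto
    have dys: "distinct ys" using less.prems xs ys_def by auto
    have setx: "set xs = insert m (set ys)" using xs ys_def by auto
    have mnot: "m \<notin> set ys" using less.prems xs ys_def by auto
    have lt: "\<forall>a\<in>set ys. a < m"
      using mnot setx unfolding m_def
      by (metis List.finite_set Max_ge insert_iff less_eq_real_def)
    have IH: "L p (set ys) \<le> cc p ys"
      using less.hyps[of ys] dys ys_ne xs ys_def by simp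
    let ?A = "set ys"
    have fin: "finite ?A" "?A \<noteq> {}" using ys_ne by auto
    have hd_in: "hd ys \<in> ?A" "last ys \<in> ?A" using ys_ne by auto
    have key: "(m - Max ?A) powr p + (m - Min ?A) powr p - (Max ?A - Min ?A) powr p
         \<le> (m - hd ys) powr p + (m - last ys) powr p - \<bar>hd ys - last ys\<bar> powr p"
      using key_ineq[OF p, of "Min ?A" "hd ys" "Max ?A" "last ys" m] hd_in fin lt
      by (simp add: order_less_imp_le)
    have "\<bar>last ys - m\<bar> = m - last ys" "\<bar>m - hd ys\<bar> = m - hd ys"
      using lt hd_in by auto
    then have "cc p (ys @ [m]) = cc p ys - \<bar>hd ys - last ys\<bar> powr p + (m - last ys) powr p + (m - hd ys) powr p"
      using cc_snoc[OF ys_ne, of p m] by (simp add: abs_minus_commute)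
    moreover have "L p (set xs) = L p ?A - (Max ?A - Min ?A) powr p + (m - Max ?A) powr p + (m - Min ?A) powr p"
      using setx L_insert_max[OF fin lt] by simp
    ultimately show ?thesis using IH key ccx by linarith
  qed
qed

lemma sorted_hd_last:
  assumes "sorted ys" "ys \<noteq> []"
  shows "hd ys = Min (set ys)" "last ys = Max (set ys)"
proof -
  show "hd ys = Min (set ys)" using assms
    by (cases ys) (auto intro!: Min_eqI[symmetric])
  have "y \<le> last ys" if "y \<in> set ys" for y
    using assms that by (auto simp: sorted_iff_nth_mono in_set_conv_nth last_conv_nth)
  then show "last ys = Max (set ys)" using assms
    by (intro Max_eqI[symmetric]) auto
qed

lemma L_sorted:
  shows "sorted xs \<Longrightarrow> distinct xs \<Longrightarrow> xs \<noteq> [] \<Longrightarrow> cc p xs = L p (set xs)"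
proof (induction xs rule: rev_induct)
  case Nil then show ?case by simp
next
  case (snoc m ys)
  show ?case
  proof (cases "ys = []")
    case True then show ?thesis by (simp add: L_single cc_single)
  next
    case False
    let ?A = "set ys"
    have s: "sorted ys" "distinct ys" using snoc.prems by (auto simp: sorted_append)
    have lt: "\<forall>a\<in>?A. a < m" using snoc.prems by (auto simp: sorted_append order.strict_iff_order)
    have fin: "finite ?A" "?A \<noteq> {}" using False by auto
    have hl: "hd ys = Min ?A" "last ys = Max ?A" using sorted_hd_last[OF s(1) False] by auto
    have "Max ?A < m" "Min ?A < m" "Min ?A \<le> Max ?A" using lt Max_in[OF fin] Min_in[OF fin] fin by auto
    then have "\<bar>last ys - m\<bar> = m - last ys" "\<bar>m - hd ys\<bar> = m - hd ys" "\<bar>last ys - hd ys\<bar> = Max ?A - Min ?A"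
      using hl by auto
    then show ?thesis using cc_snoc[OF False, of p m] snoc.IH[OF s False] L_insert_max[OF fin lt] hl
      by simp
  qed
qed


lemma perm_list_props:
  assumes "\<sigma> permutes {..<N}" "inj_on x {..<N}"
  shows "distinct (map (x \<circ> \<sigma>) [0..<N])" "set (map (x \<circ> \<sigma>) [0..<N]) = x ` {..<N}"
proof -
  have bij: "bij_betw \<sigma> {..<N} {..<N}" using assms(1) by (rule permutes_imp_bij)
  have "inj_on (x \<circ> \<sigma>) {..<N}"
    using bij assms(2) by (metis bij_betw_def comp_inj_on)
  then show "distinct (map (x \<circ> \<sigma>) [0..<N])"
    by (simp add: distinct_map atLeast0LessThan)
  have "set (map (x \<circ> \<sigma>) [0..<N]) = x ` (\<sigma> ` {..<N})"
    by (simp add: image_comp atLeast0LessThan)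
  also have "\<sigma> ` {..<N} = {..<N}" using bij by (simp add: bij_betw_def)
  finally show "set (map (x \<circ> \<sigma>) [0..<N]) = x ` {..<N}" .
qed

lemma E_N_eq:
  assumes p: "0 < p" "p \<le> 1" and N: "N \<ge> 1" and inj: "inj_on x {..<N}"
  shows "E_N N p x = L p (x ` {..<N})"
proof -
  let ?S = "{ham_cost N p \<sigma> x | \<sigma>. \<sigma> permutes {..<N}}"
  have S_eq: "?S = (\<lambda>\<sigma>. ham_cost N p \<sigma> x) ` {\<sigma>. \<sigma> permutes {..<N}}" by auto
  have fin: "finite ?S" unfolding S_eq by (intro finite_imageI finite_permutations) simp
  have lower: "L p (x ` {..<N}) \<le> c" if "c \<in> ?S" for c
  proof -
    from that obtain \<sigma> where \<sigma>: "\<sigma> permutes {..<N}" "c = ham_cost N p \<sigma> x" by auto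
    have "c = cc p (map (x \<circ> \<sigma>) [0..<N])" using \<sigma> ham_cost_cc[OF N] by simp
    moreover have "L p (set (map (x \<circ> \<sigma>) [0..<N])) \<le> cc p (map (x \<circ> \<sigma>) [0..<N])"
      using L_lower[OF p, of "map (x \<circ> \<sigma>) [0..<N]"] perm_list_props[OF \<sigma>(1) inj] N by auto
    ultimately show ?thesis using perm_list_props[OF \<sigma>(1) inj] by simp
  qed
  let ?xs = "map x [0..<N]"
  have "mset (sort ?xs) = mset ?xs" by simp
  then obtain \<sigma> where \<sigma>: "\<sigma> permutes {..<length ?xs}" "permute_list \<sigma> ?xs = sort ?xs"
    by (rule mset_eq_permutation)
  have \<sigma>N: "\<sigma> permutes {..<N}" using \<sigma> by simp
  have "permute_list \<sigma> ?xs = map (x \<circ> \<sigma>) [0..<N]"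
    unfolding permute_list_def using permutes_in_image[OF \<sigma>N]
    by (intro map_cong) auto
  then have eqs: "map (x \<circ> \<sigma>) [0..<N] = sort ?xs" using \<sigma> by simp
  have "ham_cost N p \<sigma> x = cc p (sort ?xs)" using ham_cost_cc[OF N] eqs by simp
  also have "\<dots> = L p (set (sort ?xs))"
    using perm_list_props[OF \<sigma>N inj] eqs N by (intro L_sorted) (auto simp del: set_sort)
  also have "set (sort ?xs) = x ` {..<N}" by (auto simp: atLeast0LessThan)
  finally have mem: "L p (x ` {..<N}) \<in> ?S" using \<sigma>N by force
  show ?thesis unfolding E_N_def
    by (rule Min_eqI[OF fin lower mem])
qed


definition gp :: "real \<Rightarrow> real \<Rightarrow> real \<Rightarrow> real" where
  "gp p a b = of_bool (0 \<le> a \<and> a < b \<and> b \<le> 1) * (b - a) powr p"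

definition gapS :: "real \<Rightarrow> nat set \<Rightarrow> (nat \<Rightarrow> real) \<Rightarrow> real" where
  "gapS p I x = (\<Sum>j\<in>I. \<Sum>i\<in>I. gp p (x i) (x j) * (\<Prod>k\<in>I-{i,j}. of_bool (x k \<le> x i \<or> x j \<le> x k)))"

definition rngS :: "real \<Rightarrow> nat set \<Rightarrow> (nat \<Rightarrow> real) \<Rightarrow> real" where
  "rngS p I x = (\<Sum>j\<in>I. \<Sum>i\<in>I. gp p (x i) (x j) * (\<Prod>k\<in>I-{i,j}. of_bool (x i \<le> x k \<and> x k \<le> x j)))"

lemma prod_of_bool: "finite K \<Longrightarrow> (\<Prod>k\<in>K. (of_bool (P k) :: real)) = of_bool (\<forall>k\<in>K. P k)"
  by (induction K rule: finite_induct) auto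

lemma double_reindex:
  assumes "inj_on x I"
  shows "(\<Sum>b\<in>x`I. \<Sum>a\<in>x`I. h a b) = (\<Sum>j\<in>I. \<Sum>i\<in>I. h (x i) (x j))"
  using assms by (simp add: sum.reindex)

lemma G_pairs:
  assumes I: "finite I" "inj_on x I" "x ` I \<subseteq> {0..1}"
  shows "G p (x ` I) = gapS p I x"
  unfolding G_def gapS_def double_reindex[OF I(2)]
proof (intro sum.cong refl)
  fix i j assume ij: "i \<in> I" "j \<in> I"
  have "(\<forall>c\<in>x ` I. c \<le> x i \<or> x j \<le> c) \<longleftrightarrow> (\<forall>k\<in>I-{i,j}. x k \<le> x i \<or> x j \<le> x k)"
    using ij by auto
  moreover have "0 \<le> x i" "x j \<le> 1" using I ij by auto
  moreover have P: "(\<Prod>k\<in>I-{i,j}. (of_bool (x k \<le> x i \<or> x j \<le> x k)::real)) = of_bool (\<forall>k\<in>I-{i,j}. x k \<le> x i \<or> x j \<le> x k)"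
    using I by (intro prod_of_bool) auto
  ultimately show "of_bool (x i < x j \<and> (\<forall>c\<in>x ` I. c \<le> x i \<or> x j \<le> c)) * (x j - x i) powr p =
         gp p (x i) (x j) * (\<Prod>k\<in>I - {i, j}. of_bool (x k \<le> x i \<or> x j \<le> x k))"
    unfolding P gp_def by auto
qed

lemma rng_pairs:
  assumes I: "finite I" "inj_on x I" "x ` I \<subseteq> {0..1}" "card I \<ge> 2"
  shows "(Max (x ` I) - Min (x ` I)) powr p = rngS p I x"
proof -
  let ?A = "x ` I"
  have cA: "card ?A \<ge> 2" using I by (simp add: card_image)
  have fin: "finite ?A" "?A \<noteq> {}" using I cA by auto
  have lt: "Min ?A < Max ?A"
  proof (rule ccontr)
    assume "\<not> Min ?A < Max ?A"
    then have "Max ?A \<le> Min ?A" by simp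
    then have "\<forall>a\<in>?A. \<forall>b\<in>?A. a = b" using fin
      by (meson Max_ge Min_le order_antisym order_trans)
    then have "card ?A \<le> Suc 0" using card_le_Suc0_iff_eq[OF fin(1)] by blast
    then show False using cA by simp
  qed
  have "rngS p I x = (\<Sum>b\<in>?A. \<Sum>a\<in>?A. of_bool (a < b \<and> (\<forall>c\<in>?A. a \<le> c \<and> c \<le> b)) * (b - a) powr p)"
    unfolding rngS_def double_reindex[OF I(2)]
  proof (intro sum.cong refl)
    fix i j assume ij: "i \<in> I" "j \<in> I"
    have "(\<forall>c\<in>x ` I. x i \<le> c \<and> c \<le> x j) \<longleftrightarrow> x i \<le> x j \<and> (\<forall>k\<in>I-{i,j}. x i \<le> x k \<and> x k \<le> x j)"
      using ij by auto
    moreover have "0 \<le> x i" "x j \<le> 1" using I ij by auto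
    moreover have P: "(\<Prod>k\<in>I-{i,j}. (of_bool (x i \<le> x k \<and> x k \<le> x j)::real)) = of_bool (\<forall>k\<in>I-{i,j}. x i \<le> x k \<and> x k \<le> x j)"
      using I by (intro prod_of_bool) auto
    ultimately show "gp p (x i) (x j) * (\<Prod>k\<in>I - {i, j}. of_bool (x i \<le> x k \<and> x k \<le> x j)) =
      of_bool (x i < x j \<and> (\<forall>c\<in>x ` I. x i \<le> c \<and> c \<le> x j)) * (x j - x i) powr p"
      unfolding P gp_def by (cases "x i < x j"; simp)
  qed
  also have "\<dots> = (\<Sum>b\<in>?A. \<Sum>a\<in>?A. if b = Max ?A then (if a = Min ?A then (b - a) powr p else 0) else 0)"
  proof (intro sum.cong refl)
    fix a b assume ab: "a \<in> ?A" "b \<in> ?A"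
    have "(a < b \<and> (\<forall>c\<in>?A. a \<le> c \<and> c \<le> b)) \<longleftrightarrow> (b = Max ?A \<and> a = Min ?A)"
    proof
      assume h: "a < b \<and> (\<forall>c\<in>?A. a \<le> c \<and> c \<le> b)"
      have "Max ?A = b" using h ab fin by (intro Max_eqI) auto
      moreover have "Min ?A = a" using h ab fin by (intro Min_eqI) auto
      ultimately show "b = Max ?A \<and> a = Min ?A" by simp
    next
      assume "b = Max ?A \<and> a = Min ?A"
      then show "a < b \<and> (\<forall>c\<in>?A. a \<le> c \<and> c \<le> b)" using lt fin by simp
    qed
    then show "of_bool (a < b \<and> (\<forall>c\<in>?A. a \<le> c \<and> c \<le> b)) * (b - a) powr p =
       (if b = Max ?A then (if a = Min ?A then (b - a) powr p else 0) else 0)" by auto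
  qed
  also have "\<dots> = (\<Sum>b\<in>?A. if b = Max ?A then (\<Sum>a\<in>?A. if a = Min ?A then (b - a) powr p else 0) else 0)"
    by (intro sum.cong refl) auto
  also have "\<dots> = (Max ?A - Min ?A) powr p"
    using fin Max_in[OF fin] Min_in[OF fin] by (simp add: sum.delta')
  finally show ?thesis by simp
qed

lemma E_N_pairs:
  assumes p: "0 < p" "p \<le> 1" and N: "N \<ge> 2" and inj: "inj_on x {..<N}" and rng: "x ` {..<N} \<subseteq> {0..1}"
  shows "E_N N p x = gapS p {..<N} x + rngS p {..<N} x"
proof -
  have "E_N N p x = L p (x ` {..<N})" using E_N_eq[OF p _ inj] N by simp
  also have "\<dots> = gapS p {..<N} x + rngS p {..<N} x"
    unfolding L_def using G_pairs[OF _ inj rng] rng_pairs[OF _ inj rng] N by simp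
  finally show ?thesis .
qed


definition U :: "real measure" where "U = uniform_measure lborel {0..1}"

lemma sets_U[measurable_cong]: "sets U = sets borel"
  by (simp add: U_def)

lemma space_U[simp]: "space U = UNIV"
  by (simp add: U_def)

lemma prob_U: "prob_space U"
  unfolding U_def by (rule prob_space_uniform_measure) auto

lemma U_density: "U = density lborel (\<lambda>x. ennreal (indicator {0..1::real} x))"
  unfolding U_def uniform_measure_def by (intro density_cong) (auto simp: indicator_def)

lemma integral_U:
  fixes f :: "real \<Rightarrow> real"
  assumes [measurable]: "f \<in> borel_measurable borel"
  shows "integral\<^sup>L U f = (LINT x:{0..1}|lborel. f x)"
  unfolding U_density set_lebesgue_integral_def
  by (subst integral_density) auto

lemma lint_Icc_eq_integral:
  fixes f :: "real \<Rightarrow> real"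
  assumes "continuous_on {a..b} f"
  shows "(LINT x:{a..b}|lborel. f x) = integral {a..b} f"
  using set_borel_integral_eq_integral(2)[OF borel_integrable_atLeastAtMost'[OF assms]] .

lemma int_inner:
  fixes q b :: real
  assumes q: "0 < q" and b: "0 \<le> b"
  shows "(LINT a:{0..b}|lborel. (b - a) powr q) = b powr (q+1) / (q+1)"
proof -
  have cont: "continuous_on {0..b} (\<lambda>a. (b - a) powr q)"
    using q by (intro continuous_on_powr' continuous_intros) auto
  define F where "F a = - ((b - a) powr (q+1) / (q+1))" for a
  have "((\<lambda>a. (b - a) powr q) has_integral (F b - F 0)) {0..b}"
  proof (rule fundamental_theorem_of_calculus_interior[OF b])
    show "continuous_on {0..b} F" unfolding F_def
      using q by (intro continuous_on_powr' continuous_intros) auto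
    fix x assume x: "x \<in> {0<..<b}"
    have "DERIV (\<lambda>a. (b - a) powr (q+1)) x :> (q+1) * (b - x) powr (q + 1 - of_nat 1) * (-1)"
      using x by (intro DERIV_fun_powr derivative_eq_intros) auto
    then have "DERIV F x :> (b - x) powr q"
      unfolding F_def using q x by (auto intro!: derivative_eq_intros)
    then show "(F has_vector_derivative (b - x) powr q) (at x)"
      by (simp add: has_real_derivative_iff_has_vector_derivative)
  qed
  then have "integral {0..b} (\<lambda>a. (b - a) powr q) = F b - F 0" by (rule integral_unique)
  then show ?thesis using lint_Icc_eq_integral[OF cont] q by (simp add: F_def)
qed

lemma int_outer:
  fixes q :: real
  assumes q: "0 < q"
  shows "(LINT b:{0..1}|lborel. b powr (q+1) / (q+1)) = 1 / ((q+1)*(q+2))"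
proof -
  have cont: "continuous_on {0..1} (\<lambda>b::real. b powr (q+1) / (q+1))"
    using q by (intro continuous_on_powr' continuous_intros) auto
  define F where "F b = b powr (q+2) / ((q+1)*(q+2))" for b :: real
  have "((\<lambda>b. b powr (q+1) / (q+1)) has_integral (F 1 - F 0)) {0..1}"
  proof (rule fundamental_theorem_of_calculus_interior)
    show "continuous_on {0..1} F" unfolding F_def
      using q by (intro continuous_on_powr' continuous_intros) auto
    fix x :: real assume x: "x \<in> {0<..<1}"
    have "DERIV (\<lambda>b. b powr (q+2)) x :> (q+2) * x powr (q + 2 - of_nat 1) * 1"
      using x by (intro DERIV_fun_powr derivative_eq_intros) auto
    then have "DERIV F x :> (q+2) * x powr (q + 2 - of_nat 1) * 1 / ((q+1)*(q+2))"
      unfolding F_def by (rule DERIV_cdivide)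
    moreover have "(q+2) * x powr (q + 2 - of_nat 1) * 1 / ((q+1)*(q+2)) = x powr (q+1) / (q+1)"
    proof -
      have e: "q + 2 - of_nat 1 = q + 1" by simp
      have "q + 2 \<noteq> 0" "q + 1 \<noteq> 0" using q by auto
      then show ?thesis unfolding e by simp
    qed
    ultimately have "DERIV F x :> x powr (q+1) / (q+1)" by simp
    then show "(F has_vector_derivative x powr (q+1) / (q+1)) (at x)"
      by (simp add: has_real_derivative_iff_has_vector_derivative)
  qed simp
  then have "integral {0..1} (\<lambda>b. b powr (q+1) / (q+1)) = F 1 - F 0" by (rule integral_unique)
  then show ?thesis using lint_Icc_eq_integral[OF cont] q by (simp add: F_def)
qed

definition gq :: "real \<Rightarrow> real \<Rightarrow> real \<Rightarrow> real" where
  "gq q a b = of_bool (0 \<le> a \<and> a < b \<and> b \<le> 1) * (b - a) powr q"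

lemma gq_meas[measurable]:
  assumes [measurable]: "f \<in> borel_measurable M" "g \<in> borel_measurable M"
  shows "(\<lambda>x. gq q (f x) (g x)) \<in> borel_measurable M"
  unfolding gq_def by measurable

lemma D_int:
  assumes q: "0 < q"
  shows "(\<integral>b. (\<integral>a. gq q a b \<partial>U) \<partial>U) = 1 / ((q+1)*(q+2))"
proof -
  interpret U: prob_space U by (rule prob_U)
  have inner: "(\<integral>a. gq q a b \<partial>U) = b powr (q+1) / (q+1)" if b: "b \<in> {0..1}" for b
  proof -
    have "(\<integral>a. gq q a b \<partial>U) = (LINT a:{0..1}|lborel. gq q a b)"
      by (rule integral_U) (simp add: gq_def)
    also have "\<dots> = (LINT a:{0..b}|lborel. (b - a) powr q)"
      unfolding set_lebesgue_integral_def
      using b q by (intro Bochner_Integration.integral_cong refl) (auto simp: gq_def indicator_def)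
    also have "\<dots> = b powr (q+1) / (q+1)" using int_inner[OF q] b by simp
    finally show ?thesis .
  qed
  have "(\<integral>b. (\<integral>a. gq q a b \<partial>U) \<partial>U) = (LINT b:{0..1}|lborel. (\<integral>a. gq q a b \<partial>U))"
  proof (rule integral_U)
    have "(\<lambda>(b, a). gq q a b) \<in> borel_measurable (borel \<Otimes>\<^sub>M U)"
      by measurable
    then show "(\<lambda>b. \<integral>a. gq q a b \<partial>U) \<in> borel_measurable borel"
      by (rule U.borel_measurable_lebesgue_integral)
  qed
  also have "\<dots> = (LINT b:{0..1}|lborel. b powr (q+1) / (q+1))"
    using inner by (intro set_lebesgue_integral_cong) auto
  also have "\<dots> = 1 / ((q+1)*(q+2))" by (rule int_outer[OF q])
  finally show ?thesis .
qed


lemma meas2: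
  assumes "(\<lambda>w. g (fst w) (snd w)) \<in> borel_measurable (borel \<Otimes>\<^sub>M borel)"
    and "f1 \<in> borel_measurable M" "f2 \<in> borel_measurable M"
  shows "(\<lambda>x. g (f1 x) (f2 x)) \<in> borel_measurable M"
  using measurable_compose[OF measurable_Pair[OF assms(2,3)] assms(1)] by simp

lemma meas3:
  assumes "(\<lambda>w. g (fst w) (fst (snd w)) (snd (snd w))) \<in> borel_measurable (borel \<Otimes>\<^sub>M (borel \<Otimes>\<^sub>M borel))"
    and "f1 \<in> borel_measurable M" "f2 \<in> borel_measurable M" "f3 \<in> borel_measurable M"
  shows "(\<lambda>x. g (f1 x) (f2 x) (f3 x)) \<in> borel_measurable M"
  using measurable_compose[OF measurable_Pair[OF assms(2) measurable_Pair[OF assms(3,4)]] assms(1)] by simp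

lemma abs_prod_le1:
  fixes f :: "'i \<Rightarrow> real"
  shows "(\<And>k. \<bar>f k\<bar> \<le> 1) \<Longrightarrow> \<bar>\<Prod>k\<in>K. f k\<bar> \<le> 1"
  by (simp add: abs_prod prod_le_1)

lemma pair_integral:
  fixes g :: "real \<Rightarrow> real \<Rightarrow> real" and ch :: "real \<Rightarrow> real \<Rightarrow> real \<Rightarrow> real" and I :: "nat set"
  assumes I: "finite I" "i \<in> I" "j \<in> I" "i \<noteq> j"
    and gm: "(\<lambda>w. g (fst w) (snd w)) \<in> borel_measurable (borel \<Otimes>\<^sub>M borel)"
    and cm: "(\<lambda>w. ch (fst w) (fst (snd w)) (snd (snd w))) \<in> borel_measurable (borel \<Otimes>\<^sub>M (borel \<Otimes>\<^sub>M borel))"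
    and gb: "\<And>a b. \<bar>g a b\<bar> \<le> B" and cb: "\<And>a b c. \<bar>ch a b c\<bar> \<le> 1"
  shows "integrable (PiM I (\<lambda>_. U)) (\<lambda>x. g (x i) (x j) * (\<Prod>k\<in>I-{i,j}. ch (x i) (x j) (x k)))"
    and "(\<integral>x. g (x i) (x j) * (\<Prod>k\<in>I-{i,j}. ch (x i) (x j) (x k)) \<partial>PiM I (\<lambda>_. U))
         = (\<integral>b. (\<integral>a. g a b * (\<integral>c. ch a b c \<partial>U) ^ card (I-{i,j}) \<partial>U) \<partial>U)"
proof -
  interpret U: prob_space U by (rule prob_U)
  interpret PS: product_prob_space "\<lambda>_::nat. U"
    by unfold_locales
  note [measurable] = meas2[OF gm] meas3[OF cm]
  define K where "K = I - {i,j}"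
  define P where "P a b = (\<integral>c. ch a b c \<partial>U)" for a b
  have finK: "finite K" using I K_def by auto
  have Pm: "(\<lambda>w. P (fst w) (snd w)) \<in> borel_measurable (borel \<Otimes>\<^sub>M borel)"
  proof -
    have "(\<lambda>(w, c). ch (fst w) (snd w) c) \<in> borel_measurable ((borel \<Otimes>\<^sub>M borel) \<Otimes>\<^sub>M U)"
      by measurable
    then show ?thesis unfolding P_def by (rule U.borel_measurable_lebesgue_integral)
  qed
  note [measurable] = meas2[OF Pm]
  have Pb: "\<bar>P a b\<bar> \<le> 1" for a b
  proof -
    have "\<bar>P a b\<bar> \<le> (\<integral>c. \<bar>ch a b c\<bar> \<partial>U)" unfolding P_def by (rule integral_abs_bound)
    also have "\<dots> \<le> (\<integral>c. 1 \<partial>U)"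
      using cb by (intro integral_mono U.integrable_const_bound[where B=1]) (auto simp: cm)
    finally show ?thesis using U.prob_space by simp
  qed
  let ?F = "\<lambda>x. g (x i) (x j) * (\<Prod>k\<in>K. ch (x i) (x j) (x k))"
  have Fm: "?F \<in> borel_measurable (PiM I (\<lambda>_. U))"
    using I unfolding K_def by measurable
  have Fb: "\<bar>?F x\<bar> \<le> B" for x
  proof -
    have "\<bar>?F x\<bar> = \<bar>g (x i) (x j)\<bar> * \<bar>\<Prod>k\<in>K. ch (x i) (x j) (x k)\<bar>" by (simp add: abs_mult)
    also have "\<dots> \<le> B * 1"
      using gb cb by (intro mult_mono abs_prod_le1) (auto intro: order_trans[OF abs_ge_zero gb])
    finally show ?thesis by simp
  qed
  have probI: "\<And>J. prob_space (PiM J (\<lambda>_::nat. U))" by (intro prob_space_PiM prob_U)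
  have fmI: "\<And>J. finite_measure (PiM J (\<lambda>_::nat. U))" using probI by (simp add: prob_space_def)
  have intF: "integrable (PiM I (\<lambda>_. U)) ?F"
    using Fb Fm by (intro finite_measure.integrable_const_bound[OF fmI, where B=B]) auto
  then show int: "integrable (PiM I (\<lambda>_. U)) (\<lambda>x. g (x i) (x j) * (\<Prod>k\<in>I-{i,j}. ch (x i) (x j) (x k)))"
    unfolding K_def .
  have IK: "I = {i,j} \<union> K" "{i,j} \<inter> K = {}" using I unfolding K_def by auto
  have "(\<integral>x. ?F x \<partial>PiM I (\<lambda>_. U)) = (\<integral>y. (\<integral>z. ?F (merge {i,j} K (y, z)) \<partial>PiM K (\<lambda>_. U)) \<partial>PiM {i,j} (\<lambda>_. U))"
    using intF IK finK by (subst IK(1), intro PS.product_integral_fold) auto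
  also have "\<dots> = (\<integral>y. g (y i) (y j) * P (y i) (y j) ^ card K \<partial>PiM {i,j} (\<lambda>_. U))"
  proof (intro Bochner_Integration.integral_cong refl)
    fix y :: "nat \<Rightarrow> real"
    have "(\<integral>z. ?F (merge {i,j} K (y, z)) \<partial>PiM K (\<lambda>_. U))
        = (\<integral>z. g (y i) (y j) * (\<Prod>k\<in>K. ch (y i) (y j) (z k)) \<partial>PiM K (\<lambda>_. U))"
      using IK by (intro Bochner_Integration.integral_cong refl arg_cong2[where f="(*)"] prod.cong)
        (auto simp: merge_def)
    also have "\<dots> = g (y i) (y j) * (\<integral>z. (\<Prod>k\<in>K. ch (y i) (y j) (z k)) \<partial>PiM K (\<lambda>_. U))"
      by simp
    also have "(\<integral>z. (\<Prod>k\<in>K. ch (y i) (y j) (z k)) \<partial>PiM K (\<lambda>_. U)) = (\<Prod>k\<in>K. P (y i) (y j))"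
      unfolding P_def
      using cb by (intro PS.product_integral_prod finK U.integrable_const_bound[where B=1]) auto
    finally show "(\<integral>z. ?F (merge {i,j} K (y, z)) \<partial>PiM K (\<lambda>_. U)) = g (y i) (y j) * P (y i) (y j) ^ card K"
      by simp
  qed
  also have "\<dots> = (\<integral>x. (\<integral>a. g ((x(i:=a)) i) ((x(i:=a)) j) * P ((x(i:=a)) i) ((x(i:=a)) j) ^ card K \<partial>U) \<partial>PiM {j} (\<lambda>_. U))"
  proof -
    have "integrable (PiM (insert i {j}) (\<lambda>_. U)) (\<lambda>y. g (y i) (y j) * P (y i) (y j) ^ card K)"
    proof (intro finite_measure.integrable_const_bound[OF fmI, where B=B])
      show "AE x in PiM (insert i {j}) (\<lambda>_. U). norm (g (x i) (x j) * P (x i) (x j) ^ card K) \<le> B"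
      proof (intro AE_I2)
        fix x :: "nat \<Rightarrow> real"
        have "\<bar>g (x i) (x j) * P (x i) (x j) ^ card K\<bar> \<le> B * 1"
          unfolding abs_mult power_abs using gb Pb
          by (intro mult_mono power_le_one) (auto intro: order_trans[OF abs_ge_zero gb])
        then show "norm (g (x i) (x j) * P (x i) (x j) ^ card K) \<le> B" by simp
      qed
    qed measurable
    then show ?thesis using I by (simp add: PS.product_integral_insert insert_commute)
  qed
  also have "\<dots> = (\<integral>x. (\<integral>a. g a (x j) * P a (x j) ^ card K \<partial>U) \<partial>PiM {j} (\<lambda>_. U))"
    using I by simp
  also have "\<dots> = (\<integral>b. (\<integral>a. g a b * P a b ^ card K \<partial>U) \<partial>U)"
  proof (rule PS.product_integral_singleton)
    have "(\<lambda>(b, a). g a b * P a b ^ card K) \<in> borel_measurable (borel \<Otimes>\<^sub>M U)" by measurable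
    then show "(\<lambda>b. \<integral>a. g a b * P a b ^ card K \<partial>U) \<in> borel_measurable U"
      by (simp add: measurable_cong_sets[OF sets_U refl] U.borel_measurable_lebesgue_integral)
  qed
  finally show "(\<integral>x. g (x i) (x j) * (\<Prod>k\<in>I-{i,j}. ch (x i) (x j) (x k)) \<partial>PiM I (\<lambda>_. U))
         = (\<integral>b. (\<integral>a. g a b * (\<integral>c. ch a b c \<partial>U) ^ card (I-{i,j}) \<partial>U) \<partial>U)"
    unfolding K_def P_def .
qed


lemma measure_U: "A \<in> sets borel \<Longrightarrow> measure U A = measure lborel ({0..1} \<inter> A)"
  unfolding U_def by (subst measure_uniform_measure) auto

lemma P_rng:
  assumes "0 \<le> a" "a \<le> b" "b \<le> 1"
  shows "(\<integral>c. of_bool (a \<le> c \<and> c \<le> b) \<partial>U) = b - a"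
proof -
  interpret U: prob_space U by (rule prob_U)
  have "(\<integral>c. of_bool (a \<le> c \<and> c \<le> b) \<partial>U) = (\<integral>c. indicator {a..b} c \<partial>U)"
    by (intro Bochner_Integration.integral_cong) (auto simp: indicator_def)
  also have "\<dots> = measure U {a..b}" by simp
  also have "\<dots> = b - a" using assms by (simp add: measure_U Int_absorb1)
  finally show ?thesis .
qed

lemma P_gap:
  assumes "0 \<le> a" "a \<le> b" "b \<le> 1"
  shows "(\<integral>c. of_bool (c \<le> a \<or> b \<le> c) \<partial>U) = 1 - (b - a)"
proof -
  interpret U: prob_space U by (rule prob_U)
  have "(\<integral>c. of_bool (c \<le> a \<or> b \<le> c) \<partial>U) = (\<integral>c. 1 - indicator {a<..<b} c \<partial>U)"
    by (intro Bochner_Integration.integral_cong) (auto simp: indicator_def)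
  also have "\<dots> = 1 - measure U {a<..<b}"
    by (subst Bochner_Integration.integral_diff) (auto simp: U.prob_space[simplified] intro!: U.integrable_const_bound[where B=1])
  also have "\<dots> = 1 - (b - a)" using assms by (simp add: measure_U Int_absorb1 subset_eq)
  finally show ?thesis .
qed

lemma gq_bound: "0 \<le> q \<Longrightarrow> \<bar>gq q a b\<bar> \<le> 1"
  unfolding gq_def using powr_mono2[of q "b-a" 1] by auto

lemma gq_zero: "\<not> (0 \<le> a \<and> a < b \<and> b \<le> 1) \<Longrightarrow> gq q a b = 0"
  unfolding gq_def by simp

lemma gq_mult_pow: "gq q a b * (b - a) ^ k = gq (q + real k) a b"
  unfolding gq_def by (auto simp: powr_add powr_realpow)

lemma gq_meas2: "(\<lambda>w. gq q (fst w) (snd w)) \<in> borel_measurable (borel \<Otimes>\<^sub>M borel)"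
  by measurable

lemma DD_meas:
  fixes f :: "real \<Rightarrow> real \<Rightarrow> real"
  assumes [measurable]: "(\<lambda>w. f (fst w) (snd w)) \<in> borel_measurable (borel \<Otimes>\<^sub>M borel)"
  shows "(\<lambda>b. \<integral>a. f a b \<partial>U) \<in> borel_measurable borel"
proof -
  interpret U: prob_space U by (rule prob_U)
  have "(\<lambda>(b, a). f a b) \<in> borel_measurable (borel \<Otimes>\<^sub>M U)"
    using measurable_compose[OF measurable_Pair[OF measurable_snd measurable_fst] assms]
    by (simp add: case_prod_beta measurable_cong_sets[OF sets_pair_measure_cong[OF refl sets_U] refl])
  then show ?thesis by (rule U.borel_measurable_lebesgue_integral[where f="\<lambda>b a. f a b"])
qed

lemma V_rng:
  assumes p: "0 < p"
  shows "(\<integral>b. (\<integral>a. gq p a b * (\<integral>c. of_bool (a \<le> c \<and> c \<le> b) \<partial>U) ^ n \<partial>U) \<partial>U)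
       = 1 / ((p + n + 1) * (p + n + 2))"
proof -
  have "(\<integral>b. (\<integral>a. gq p a b * (\<integral>c. of_bool (a \<le> c \<and> c \<le> b) \<partial>U) ^ n \<partial>U) \<partial>U)
      = (\<integral>b. (\<integral>a. gq (p + n) a b \<partial>U) \<partial>U)"
  proof (intro Bochner_Integration.integral_cong refl)
    fix a b
    show "gq p a b * (\<integral>c. of_bool (a \<le> c \<and> c \<le> b) \<partial>U) ^ n = gq (p + n) a b"
    proof (cases "0 \<le> a \<and> a < b \<and> b \<le> 1")
      case True then show ?thesis using P_rng[of a b] gq_mult_pow[of p a b n] by simp
    next
      case False then show ?thesis by (simp add: gq_zero[OF False])
    qed
  qed
  also have "\<dots> = 1 / ((p + n + 1) * (p + n + 2))"
    using D_int[of "p + n"] p by (simp add: add.assoc)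
  finally show ?thesis .
qed

lemma V_gap:
  assumes p: "0 < p"
  shows "(\<integral>b. (\<integral>a. gq p a b * (\<integral>c. of_bool (c \<le> a \<or> b \<le> c) \<partial>U) ^ n \<partial>U) \<partial>U)
       = (\<Sum>k\<le>n. of_nat (n choose k) * (-1)^k / ((p + k + 1) * (p + k + 2)))"
proof -
  interpret U: prob_space U by (rule prob_U)
  have "(\<integral>b. (\<integral>a. gq p a b * (\<integral>c. of_bool (c \<le> a \<or> b \<le> c) \<partial>U) ^ n \<partial>U) \<partial>U)
      = (\<integral>b. (\<integral>a. (\<Sum>k\<le>n. (of_nat (n choose k) * (-1)^k) * gq (p + k) a b) \<partial>U) \<partial>U)"
  proof (intro Bochner_Integration.integral_cong refl)
    fix a b
    show "gq p a b * (\<integral>c. of_bool (c \<le> a \<or> b \<le> c) \<partial>U) ^ n = (\<Sum>k\<le>n. (of_nat (n choose k) * (-1)^k) * gq (p + k) a b)"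
    proof (cases "0 \<le> a \<and> a < b \<and> b \<le> 1")
      case True
      have "gq p a b * (\<integral>c. of_bool (c \<le> a \<or> b \<le> c) \<partial>U) ^ n = gq p a b * (1 - (b - a)) ^ n"
        by (subst P_gap[of a b]) (use True in auto)
      also have "\<dots> = gq p a b * (- (b - a) + 1) ^ n"
        by (rule arg_cong[where f="\<lambda>t. gq p a b * t ^ n"]) simp
      also have "\<dots> = (\<Sum>k\<le>n. gq p a b * (of_nat (n choose k) * (- (b - a)) ^ k))"
        by (simp add: binomial_ring sum_distrib_left)
      also have "\<dots> = (\<Sum>k\<le>n. (of_nat (n choose k) * (-1)^k) * gq (p + k) a b)"
      proof (intro sum.cong refl)
        fix k
        have "gq p a b * (of_nat (n choose k) * (- (b - a)) ^ k) = (of_nat (n choose k) * (-1)^k) * (gq p a b * (b - a) ^ k)"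
          using power_minus[of "b - a" k] by (simp only: mult_ac)
        then show "gq p a b * (of_nat (n choose k) * (- (b - a)) ^ k) = (of_nat (n choose k) * (-1)^k) * gq (p + k) a b"
          by (simp add: gq_mult_pow)
      qed
      finally show ?thesis .
    next
      case False then show ?thesis by (simp add: gq_zero[OF False])
    qed
  qed
  also have "\<dots> = (\<integral>b. (\<Sum>k\<le>n. (of_nat (n choose k) * (-1)^k) * (\<integral>a. gq (p + k) a b \<partial>U)) \<partial>U)"
  proof (intro Bochner_Integration.integral_cong refl)
    fix b
    show "(\<integral>a. (\<Sum>k\<le>n. (of_nat (n choose k) * (-1)^k) * gq (p + k) a b) \<partial>U)
        = (\<Sum>k\<le>n. (of_nat (n choose k) * (-1)^k) * (\<integral>a. gq (p + k) a b \<partial>U))"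
    proof -
      have ik: "integrable U (\<lambda>a. (of_nat (n choose k) * (-1)^k) * gq (p + k) a b)" for k :: nat
      proof (intro integrable_mult_right U.integrable_const_bound[where B=1])
        show "AE x in U. norm (gq (p + real k) x b) \<le> 1" using gq_bound[of "p + real k"] p by simp
      qed simp
      have "(\<integral>a. (\<Sum>k\<le>n. (of_nat (n choose k) * (-1)^k) * gq (p + k) a b) \<partial>U)
          = (\<Sum>k\<le>n. (\<integral>a. (of_nat (n choose k) * (-1)^k) * gq (p + k) a b \<partial>U))"
        by (rule Bochner_Integration.integral_sum[OF ik])
      also have "\<dots> = (\<Sum>k\<le>n. (of_nat (n choose k) * (-1)^k) * (\<integral>a. gq (p + k) a b \<partial>U))"
        by (intro sum.cong refl Bochner_Integration.integral_mult_right_zero)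
      finally show ?thesis .
    qed
  qed
  also have "\<dots> = (\<Sum>k\<le>n. (of_nat (n choose k) * (-1)^k) * (\<integral>b. (\<integral>a. gq (p + k) a b \<partial>U) \<partial>U))"
  proof -
    have bnd: "\<bar>\<integral>a. gq (p + k) a b \<partial>U\<bar> \<le> 1" for k :: nat and b
    proof -
      have "\<bar>\<integral>a. gq (p + k) a b \<partial>U\<bar> \<le> (\<integral>a. \<bar>gq (p + k) a b\<bar> \<partial>U)" by (rule integral_abs_bound)
      also have "\<dots> \<le> (\<integral>a. 1 \<partial>U)"
        using gq_bound p by (intro integral_mono U.integrable_const_bound[where B=1]) auto
      finally show ?thesis using U.prob_space by simp
    qed
    have meas: "(\<lambda>b. \<integral>a. gq (p + k) a b \<partial>U) \<in> borel_measurable U" for k :: nat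
      using DD_meas[OF gq_meas2] by (simp add: measurable_cong_sets[OF sets_U refl])
    have ik: "integrable U (\<lambda>b. (of_nat (n choose k) * (-1)^k) * (\<integral>a. gq (p + k) a b \<partial>U))" for k :: nat
    proof (intro integrable_mult_right U.integrable_const_bound[where B=1])
      show "AE x in U. norm (\<integral>a. gq (p + real k) a x \<partial>U) \<le> 1" using bnd by simp
    qed (rule meas)
    have "(\<integral>b. (\<Sum>k\<le>n. (of_nat (n choose k) * (-1)^k) * (\<integral>a. gq (p + k) a b \<partial>U)) \<partial>U)
        = (\<Sum>k\<le>n. (\<integral>b. (of_nat (n choose k) * (-1)^k) * (\<integral>a. gq (p + k) a b \<partial>U) \<partial>U))"
      by (rule Bochner_Integration.integral_sum[OF ik])
    also have "\<dots> = (\<Sum>k\<le>n. (of_nat (n choose k) * (-1)^k) * (\<integral>b. (\<integral>a. gq (p + k) a b \<partial>U) \<partial>U))"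
      by (intro sum.cong refl Bochner_Integration.integral_mult_right_zero)
    finally show ?thesis .
  qed
  also have "\<dots> = (\<Sum>k\<le>n. of_nat (n choose k) * (-1)^k / ((p + k + 1) * (p + k + 2)))"
    using p D_int[of "p + real k" for k] by (intro sum.cong refl) (simp add: add.assoc)
  finally show ?thesis .
qed


lemma comp_meas: "k \<in> I \<Longrightarrow> (\<lambda>x. x k) \<in> borel_measurable (PiM I (\<lambda>_. U))"
  using measurable_component_singleton[of k I "\<lambda>_. U"]
  by (simp add: measurable_cong_sets[OF refl sets_U])

lemma Min_meas:
  fixes h :: "'s \<Rightarrow> 'a \<Rightarrow> real"
  assumes "finite S" "S \<noteq> {}" "\<And>s. s \<in> S \<Longrightarrow> h s \<in> borel_measurable M"
  shows "(\<lambda>x. Min ((\<lambda>s. h s x) ` S)) \<in> borel_measurable M"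
  using assms
proof (induction S rule: finite_ne_induct)
  case (singleton s) then show ?case by simp
next
  case (insert s S)
  have "(\<lambda>x. Min ((\<lambda>s. h s x) ` insert s S)) = (\<lambda>x. min (h s x) (Min ((\<lambda>s. h s x) ` S)))"
    using insert.hyps by (auto simp: Min_insert)
  then show ?case using insert by (simp add: borel_measurable_min)
qed

lemma ham_cost_meas:
  assumes "\<sigma> permutes {..<N}"
  shows "ham_cost N p \<sigma> \<in> borel_measurable (PiM {..<N} (\<lambda>_. U))"
proof -
  have "(\<lambda>x. \<bar>x (\<sigma> i) - x (\<sigma> (Suc i mod N))\<bar> powr p) \<in> borel_measurable (PiM {..<N} (\<lambda>_. U))"
    if i: "i \<in> {..<N}" for i
  proof -
    have "\<sigma> i \<in> {..<N}" "\<sigma> (Suc i mod N) \<in> {..<N}"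
      using permutes_in_image[OF assms] i by auto
    note [measurable] = comp_meas[OF this(1)] comp_meas[OF this(2)]
    show ?thesis by measurable
  qed
  then show ?thesis unfolding ham_cost_def[abs_def] by (intro borel_measurable_sum) auto
qed

lemma E_N_meas: "E_N N p \<in> borel_measurable (PiM {..<N} (\<lambda>_. U))"
proof -
  have "E_N N p = (\<lambda>x. Min ((\<lambda>\<sigma>. ham_cost N p \<sigma> x) ` {\<sigma>. \<sigma> permutes {..<N}}))"
    unfolding E_N_def by (intro ext arg_cong[where f=Min]) auto
  also have "\<dots> \<in> borel_measurable (PiM {..<N} (\<lambda>_. U))"
    by (intro Min_meas ham_cost_meas) (auto intro: finite_permutations permutes_id)
  finally show ?thesis .
qed

lemma AE_range:
  assumes "finite I"
  shows "AE x in PiM I (\<lambda>_. U). \<forall>k\<in>I. x k \<in> {0..1}"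
proof -
  have "AE x in U. x \<in> {0..1}" unfolding U_def by (subst AE_uniform_measure) auto
  then show ?thesis
    using assms by (intro eventually_ball_finite ballI AE_PiM_component) (auto simp: prob_U)
qed

lemma AE_neq:
  fixes I :: "nat set"
  assumes I: "finite I" "i \<in> I" "j \<in> I" "i \<noteq> j"
  shows "AE x in PiM I (\<lambda>_. U). x i \<noteq> x j"
proof -
  interpret U: prob_space U by (rule prob_U)
  have gm: "(\<lambda>w::real\<times>real. of_bool (fst w = snd w) :: real) \<in> borel_measurable (borel \<Otimes>\<^sub>M borel)"
  proof -
    have "(\<lambda>w::real\<times>real. of_bool (fst w = snd w) :: real) = (\<lambda>w::real\<times>real. of_bool (fst w \<le> snd w \<and> snd w \<le> fst w))"
      by (intro ext) (auto simp: antisym_conv)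
    also have "\<dots> \<in> borel_measurable (borel \<Otimes>\<^sub>M borel)" by measurable
    finally show ?thesis .
  qed
  have cm: "(\<lambda>w::real\<times>real\<times>real. 1 :: real) \<in> borel_measurable (borel \<Otimes>\<^sub>M (borel \<Otimes>\<^sub>M borel))" by simp
  note PI = pair_integral[where g="\<lambda>a b. of_bool (a = b)" and ch="\<lambda>a b c. 1" and B=1, OF I gm cm]
  have int: "integrable (PiM I (\<lambda>_. U)) (\<lambda>x. of_bool (x i = x j) :: real)"
    using PI(1) by simp
  have "(\<integral>x. (of_bool (x i = x j)::real) \<partial>PiM I (\<lambda>_. U)) = (\<integral>b. (\<integral>a. (of_bool (a = b)::real) \<partial>U) \<partial>U)"
    using PI(2) U.prob_space by simp
  also have "\<dots> = (\<integral>b. 0 \<partial>U)"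
  proof (intro Bochner_Integration.integral_cong refl)
    fix b :: real
    have "(\<integral>a. (of_bool (a = b)::real) \<partial>U) = (\<integral>a. indicator {b} a \<partial>U)"
      by (intro Bochner_Integration.integral_cong) (auto simp: indicator_def)
    also have "\<dots> = measure U {b}" by simp
    also have "\<dots> = 0"
    proof -
      have e: "{0..1} \<inter> {b} = (if b \<in> {0..1} then {b..b} else {})" by auto
      show ?thesis unfolding U_def by (subst measure_uniform_measure) (auto simp: e simp del: atLeastAtMost_singleton)
    qed
    finally show "(\<integral>a. (of_bool (a = b)::real) \<partial>U) = 0" .
  qed
  finally have "(\<integral>x. (of_bool (x i = x j)::real) \<partial>PiM I (\<lambda>_. U)) = 0" by simp
  then have "AE x in PiM I (\<lambda>_. U). (of_bool (x i = x j) :: real) = 0"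
    using integral_nonneg_eq_0_iff_AE[OF int] by simp
  then show ?thesis by eventually_elim simp
qed

lemma AE_inj:
  fixes I :: "nat set"
  assumes "finite I"
  shows "AE x in PiM I (\<lambda>_. U). inj_on x I"
proof -
  have "AE x in PiM I (\<lambda>_. U). \<forall>i\<in>I. \<forall>j\<in>I. i \<noteq> j \<longrightarrow> x i \<noteq> x j"
    using assms by (intro eventually_ball_finite ballI) (auto intro: AE_neq)
  then show ?thesis by eventually_elim (auto simp: inj_on_def)
qed


lemma gp_gq: "gp = gq"
  by (intro ext) (simp add: gp_def gq_def)

lemma sum_offdiag:
  fixes c :: real
  assumes "finite I"
  shows "(\<Sum>j\<in>I. \<Sum>i\<in>I. if i = j then 0 else c) = real (card I) * (real (card I) - 1) * c"
proof -
  have "(\<Sum>i\<in>I. if i = j then 0 else c) = (real (card I) - 1) * c" if j: "j \<in> I" for j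
  proof -
    have "(\<Sum>i\<in>I. if i = j then 0 else c) = (if j = j then 0 else c) + (\<Sum>i\<in>I-{j}. if i = j then 0 else c)"
      using assms j by (rule sum.remove)
    also have "\<dots> = (\<Sum>i\<in>I-{j}. c)" by (auto intro!: sum.cong)
    also have "\<dots> = (real (card I) - 1) * c"
    proof -
      have "card I \<ge> 1" using assms j by (metis One_nat_def Suc_leI card_gt_0_iff empty_iff)
      then show ?thesis using assms j by (simp add: of_nat_diff)
    qed
    finally show ?thesis .
  qed
  then have "(\<Sum>j\<in>I. \<Sum>i\<in>I. if i = j then 0 else c) = (\<Sum>j\<in>I. (real (card I) - 1) * c)"
    by (intro sum.cong) auto
  then show ?thesis by simp
qed

lemma term_integral:
  fixes I :: "nat set" and ch :: "real \<Rightarrow> real \<Rightarrow> real \<Rightarrow> real"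
  assumes p: "0 < p" and I: "finite I" "i \<in> I" "j \<in> I"
    and cm: "(\<lambda>w. ch (fst w) (fst (snd w)) (snd (snd w))) \<in> borel_measurable (borel \<Otimes>\<^sub>M (borel \<Otimes>\<^sub>M borel))"
    and cb: "\<And>a b c. \<bar>ch a b c\<bar> \<le> 1"
  shows "integrable (PiM I (\<lambda>_. U)) (\<lambda>x. gp p (x i) (x j) * (\<Prod>k\<in>I-{i,j}. ch (x i) (x j) (x k)))"
    "(\<integral>x. gp p (x i) (x j) * (\<Prod>k\<in>I-{i,j}. ch (x i) (x j) (x k)) \<partial>PiM I (\<lambda>_. U))
      = (if i = j then 0 else (\<integral>b. (\<integral>a. gq p a b * (\<integral>c. ch a b c \<partial>U) ^ card (I-{i,j}) \<partial>U) \<partial>U))"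
proof -
  have gb: "\<And>a b. \<bar>gq p a b\<bar> \<le> 1" using p by (intro gq_bound) simp
  have "integrable (PiM I (\<lambda>_. U)) (\<lambda>x. gp p (x i) (x j) * (\<Prod>k\<in>I-{i,j}. ch (x i) (x j) (x k))) \<and>
    (\<integral>x. gp p (x i) (x j) * (\<Prod>k\<in>I-{i,j}. ch (x i) (x j) (x k)) \<partial>PiM I (\<lambda>_. U))
      = (if i = j then 0 else (\<integral>b. (\<integral>a. gq p a b * (\<integral>c. ch a b c \<partial>U) ^ card (I-{i,j}) \<partial>U) \<partial>U))"
  proof (cases "i = j")
    case True
    then have "(\<lambda>x. gp p (x i) (x j) * (\<Prod>k\<in>I-{i,j}. ch (x i) (x j) (x k))) = (\<lambda>x. 0)"
      by (simp add: gp_def)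
    then show ?thesis using True by simp
  next
    case False
    note PI = pair_integral[where g="gq p" and ch=ch and B=1, OF I False gq_meas2 cm gb cb]
    show ?thesis using PI False unfolding gp_gq by simp
  qed
  then show "integrable (PiM I (\<lambda>_. U)) (\<lambda>x. gp p (x i) (x j) * (\<Prod>k\<in>I-{i,j}. ch (x i) (x j) (x k)))"
    "(\<integral>x. gp p (x i) (x j) * (\<Prod>k\<in>I-{i,j}. ch (x i) (x j) (x k)) \<partial>PiM I (\<lambda>_. U))
      = (if i = j then 0 else (\<integral>b. (\<integral>a. gq p a b * (\<integral>c. ch a b c \<partial>U) ^ card (I-{i,j}) \<partial>U) \<partial>U))"
    by auto
qed

lemma card_minus2: "finite I \<Longrightarrow> i \<in> I \<Longrightarrow> j \<in> I \<Longrightarrow> i \<noteq> j \<Longrightarrow> card (I - {i,j}) = card I - 2"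
  by (simp add: card_Diff_subset)

lemma sum_integral_terms:
  fixes I :: "nat set" and ch :: "real \<Rightarrow> real \<Rightarrow> real \<Rightarrow> real"
  assumes p: "0 < p" and I: "finite I"
    and cm: "(\<lambda>w. ch (fst w) (fst (snd w)) (snd (snd w))) \<in> borel_measurable (borel \<Otimes>\<^sub>M (borel \<Otimes>\<^sub>M borel))"
    and cb: "\<And>a b c. \<bar>ch a b c\<bar> \<le> 1"
    and V: "(\<integral>b. (\<integral>a. gq p a b * (\<integral>c. ch a b c \<partial>U) ^ (card I - 2) \<partial>U) \<partial>U) = v"
  shows "integrable (PiM I (\<lambda>_. U)) (\<lambda>x. \<Sum>j\<in>I. \<Sum>i\<in>I. gp p (x i) (x j) * (\<Prod>k\<in>I-{i,j}. ch (x i) (x j) (x k)))"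
    "(\<integral>x. (\<Sum>j\<in>I. \<Sum>i\<in>I. gp p (x i) (x j) * (\<Prod>k\<in>I-{i,j}. ch (x i) (x j) (x k))) \<partial>PiM I (\<lambda>_. U))
      = real (card I) * (real (card I) - 1) * v"
proof -
  note T = term_integral[OF p I _ _ cm cb]
  show "integrable (PiM I (\<lambda>_. U)) (\<lambda>x. \<Sum>j\<in>I. \<Sum>i\<in>I. gp p (x i) (x j) * (\<Prod>k\<in>I-{i,j}. ch (x i) (x j) (x k)))"
    using T(1) by (intro Bochner_Integration.integrable_sum) auto
  have "(\<integral>x. (\<Sum>j\<in>I. \<Sum>i\<in>I. gp p (x i) (x j) * (\<Prod>k\<in>I-{i,j}. ch (x i) (x j) (x k))) \<partial>PiM I (\<lambda>_. U))
      = (\<Sum>j\<in>I. \<Sum>i\<in>I. (\<integral>x. gp p (x i) (x j) * (\<Prod>k\<in>I-{i,j}. ch (x i) (x j) (x k)) \<partial>PiM I (\<lambda>_. U)))"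
    using T(1) by (simp add: Bochner_Integration.integral_sum Bochner_Integration.integrable_sum)
  also have "\<dots> = (\<Sum>j\<in>I. \<Sum>i\<in>I. if i = j then 0 else v)"
    using T(2) V I by (intro sum.cong refl) (auto simp: card_minus2 numeral_2_eq_2)
  also have "\<dots> = real (card I) * (real (card I) - 1) * v" by (rule sum_offdiag[OF I])
  finally show "(\<integral>x. (\<Sum>j\<in>I. \<Sum>i\<in>I. gp p (x i) (x j) * (\<Prod>k\<in>I-{i,j}. ch (x i) (x j) (x k))) \<partial>PiM I (\<lambda>_. U))
      = real (card I) * (real (card I) - 1) * v" .
qed


lemma unif_points_U: "unif_points N = PiM {..<N} (\<lambda>_. U)"
  by (simp add: unif_points_def U_def)

theorem expected_values:
  assumes p: "0 < p" "p \<le> 1" and N: "N \<ge> 2"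
  shows "expected_E N p = real N * (real N - 1) *
     ((\<Sum>k\<le>N-2. of_nat ((N-2) choose k) * (-1)^k / ((p + k + 1) * (p + k + 2)))
      + 1 / ((p + real (N-2) + 1) * (p + real (N-2) + 2)))"
proof -
  let ?I = "{..<N}"
  let ?M = "PiM ?I (\<lambda>_. U)"
  have fin: "finite ?I" by simp
  have cmg: "(\<lambda>w::real\<times>real\<times>real. of_bool (snd (snd w) \<le> fst w \<or> fst (snd w) \<le> snd (snd w)) :: real)
     \<in> borel_measurable (borel \<Otimes>\<^sub>M (borel \<Otimes>\<^sub>M borel))" by measurable
  have cmr: "(\<lambda>w::real\<times>real\<times>real. of_bool (fst w \<le> snd (snd w) \<and> snd (snd w) \<le> fst (snd w)) :: real)
     \<in> borel_measurable (borel \<Otimes>\<^sub>M (borel \<Otimes>\<^sub>M borel))" by measurable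
  note SG = sum_integral_terms[where ch="\<lambda>a b c. of_bool (c \<le> a \<or> b \<le> c)", OF p(1) fin cmg _ V_gap[OF p(1)]]
  note SR = sum_integral_terms[where ch="\<lambda>a b c. of_bool (a \<le> c \<and> c \<le> b)", OF p(1) fin cmr _ V_rng[OF p(1)]]
  have intG: "integrable ?M (gapS p ?I)" and valG: "integral\<^sup>L ?M (gapS p ?I) = real N * (real N - 1) *
      (\<Sum>k\<le>N-2. of_nat ((N-2) choose k) * (-1)^k / ((p + k + 1) * (p + k + 2)))"
    using SG unfolding gapS_def[abs_def] by auto
  have intR: "integrable ?M (rngS p ?I)" and valR: "integral\<^sup>L ?M (rngS p ?I) = real N * (real N - 1) *
      (1 / ((p + real (N-2) + 1) * (p + real (N-2) + 2)))"
    using SR unfolding rngS_def[abs_def] by auto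
  have AE: "AE x in ?M. E_N N p x = gapS p ?I x + rngS p ?I x"
    using AE_range[OF fin] AE_inj[OF fin]
  proof eventually_elim
    case (elim x)
    then have "x ` ?I \<subseteq> {0..1}" by auto
    then show ?case using E_N_pairs[OF p N] elim by blast
  qed
  have "expected_E N p = integral\<^sup>L ?M (\<lambda>x. gapS p ?I x + rngS p ?I x)"
    unfolding expected_E_def unif_points_U
    using intG intR by (intro integral_cong_AE E_N_meas AE) auto
  also have "\<dots> = integral\<^sup>L ?M (gapS p ?I) + integral\<^sup>L ?M (rngS p ?I)"
    using intG intR by (rule Bochner_Integration.integral_add)
  finally show ?thesis using valG valR by (simp add: algebra_simps)
qed


definition Salt :: "nat \<Rightarrow> real \<Rightarrow> real" where
  "Salt n x = (\<Sum>k\<le>n. of_nat (n choose k) * (-1)^k / (x + k))"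

lemma Salt_rec:
  assumes "0 < x" shows "Salt (Suc n) x = Salt n x - Salt n (x + 1)"
proof -
  define f where "f k = of_nat (n choose k) * (-1)^k / (x + k)" for k
  have "Salt (Suc n) x = of_nat (Suc n choose 0) * (-1)^0 / (x + 0)
      + (\<Sum>k\<le>n. of_nat (Suc n choose Suc k) * (-1)^(Suc k) / (x + Suc k))"
    unfolding Salt_def by (subst sum.atMost_Suc_shift) simp
  also have "(\<Sum>k\<le>n. of_nat (Suc n choose Suc k) * (-1)^(Suc k) / (x + Suc k))
      = (\<Sum>k\<le>n. f (Suc k)) - (\<Sum>k\<le>n. of_nat (n choose k) * (-1)^k / ((x + 1) + k))"
    unfolding f_def sum_subtractf[symmetric]
  proof (intro sum.cong refl)
    fix k
    have b: "real (Suc n choose Suc k) = real (n choose k) + real (n choose Suc k)" by simp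
    have d: "x + real (Suc k) = x + 1 + real k" by simp
    define D where "D = x + 1 + real k"
    show "of_nat (Suc n choose Suc k) * (-1)^(Suc k) / (x + Suc k) =
      of_nat (n choose Suc k) * (-1)^(Suc k) / (x + Suc k) - of_nat (n choose k) * (-1)^k / ((x + 1) + k)"
      unfolding of_nat_id b d D_def[symmetric] power_Suc
      by (simp add: add_divide_distrib diff_divide_distrib algebra_simps)
  qed
  also have "(\<Sum>k\<le>n. f (Suc k)) = (\<Sum>k\<le>Suc n. f k) - f 0"
    by (subst sum.atMost_Suc_shift) simp
  also have "(\<Sum>k\<le>Suc n. f k) = Salt n x"
    unfolding Salt_def f_def by simp
  finally show ?thesis unfolding Salt_def f_def by simp
qed

lemma Salt_closed: "0 < x \<Longrightarrow> Salt n x = fact n / pochhammer x (Suc n)"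
proof (induction n arbitrary: x)
  case 0 then show ?case by (simp add: Salt_def)
next
  case (Suc n)
  have px: "pochhammer x (Suc n) > 0" "pochhammer (x+1) (Suc n) > 0" using Suc.prems
    by (auto intro: pochhammer_pos)
  have r1: "pochhammer x (Suc (Suc n)) = x * pochhammer (x + 1) (Suc n)" by (rule pochhammer_rec)
  have r2: "pochhammer x (Suc (Suc n)) = (x + of_nat (Suc n)) * pochhammer x (Suc n)" by (rule pochhammer_rec')
  have "Salt (Suc n) x = fact n / pochhammer x (Suc n) - fact n / pochhammer (x + 1) (Suc n)"
    using Suc.IH[of x] Suc.IH[of "x+1"] Suc.prems by (simp add: Salt_rec)
  also have "\<dots> = fact n * (x + of_nat (Suc n)) / pochhammer x (Suc (Suc n)) - fact n * x / pochhammer x (Suc (Suc n))"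
  proof -
    have xn: "x + of_nat (Suc n) > 0" using Suc.prems by simp
    have a: "fact n / pochhammer x (Suc n) = fact n * (x + of_nat (Suc n)) / pochhammer x (Suc (Suc n))"
      unfolding r2 using xn px by simp
    have b: "fact n / pochhammer (x + 1) (Suc n) = fact n * x / pochhammer x (Suc (Suc n))"
      unfolding r1 using Suc.prems px by simp
    show ?thesis using a b by simp
  qed
  also have "\<dots> = fact (Suc n) / pochhammer x (Suc (Suc n))"
    by (simp add: field_simps diff_divide_distrib[symmetric] algebra_simps)
  finally show ?case .
qed

lemma gap_sum_closed:
  fixes p :: real
  assumes p: "0 < p"
  shows "(\<Sum>k\<le>n. of_nat (n choose k) * (-1)^k / ((p + k + 1) * (p + k + 2))) = fact (Suc n) / pochhammer (p + 1) (Suc (Suc n))"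
proof -
  have "(\<Sum>k\<le>n. of_nat (n choose k) * (-1)^k / ((p + k + 1) * (p + k + 2)))
     = (\<Sum>k\<le>n. of_nat (n choose k) * (-1)^k / (p + 1 + k) - of_nat (n choose k) * (-1)^k / (p + 2 + k))"
  proof (intro sum.cong refl)
    fix k assume "k \<in> {..n}"
    have "p + k + 1 > 0" "p + k + 2 > 0" using p by auto
    then show "of_nat (n choose k) * (-1)^k / ((p + k + 1) * (p + k + 2))
        = of_nat (n choose k) * (-1)^k / (p + 1 + k) - of_nat (n choose k) * (-1)^k / (p + 2 + k)"
      by (simp add: field_simps)
  qed
  also have "\<dots> = Salt n (p + 1) - Salt n (p + 2)"
    unfolding Salt_def by (simp add: sum_subtractf add_ac)
  also have "\<dots> = Salt (Suc n) (p + 1)" using Salt_rec[of "p+1" n] p by (simp add: add_ac)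
  also have "\<dots> = fact (Suc n) / pochhammer (p + 1) (Suc (Suc n))" using p by (simp add: Salt_closed)
  finally show ?thesis .
qed


lemma not_npi: "(0::real) < z \<Longrightarrow> z \<notin> \<int>\<^sub>\<le>\<^sub>0"
  by (auto dest: nonpos_Ints_nonpos)

lemma expected_closed:
  assumes p: "0 < p" "p < 1" and N: "N \<ge> 3"
  shows "expected_E N p = (real N - 1) * Gamma (p + 1) * Gamma (real N + 1) / Gamma (real N + p + 1)
          + real N * (real N - 1) / ((real N + p) * (real N + p - 1))"
proof -
  have N2: "N \<ge> 2" using N by simp
  have e1: "Suc (N - 2) = N - 1" "Suc (Suc (N - 2)) = N" "real (N - 2) = real N - 2" using N by auto
  have pg: "pochhammer (p + 1) N = Gamma (p + 1 + real N) / Gamma (p + 1)"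
    using p by (intro pochhammer_Gamma not_npi) simp
  have fN: "real N * fact (N - 1) = fact N"
    using N by (metis Suc_diff_1 fact_Suc less_le_trans not_less numeral_3_eq_3 of_nat_fact zero_less_Suc of_nat_mult)
  have GN: "Gamma (real N + 1) = fact N"
    using Gamma_fact[of N, where 'a=real] by (simp add: add.commute)
  have G1: "Gamma (p + 1) > 0" using p by simp
  have G2: "Gamma (p + 1 + real N) > 0" using p by simp
  have "expected_E N p = real N * (real N - 1) * (fact (N - 1) / pochhammer (p + 1) N
      + 1 / ((p + real (N - 2) + 1) * (p + real (N - 2) + 2)))"
    using expected_values[OF p(1) _ N2] p gap_sum_closed[OF p(1), of "N - 2"] e1 by simp
  also have "fact (N - 1) / pochhammer (p + 1) N = fact (N - 1) * Gamma (p + 1) / Gamma (real N + p + 1)"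
    unfolding pg using G1 G2 by (simp add: field_simps add_ac)
  also have "(p + real (N - 2) + 1) * (p + real (N - 2) + 2) = (real N + p) * (real N + p - 1)"
    unfolding e1 by (simp add: algebra_simps)
  finally have "expected_E N p = real N * (real N - 1) * (fact (N - 1) * Gamma (p + 1) / Gamma (real N + p + 1)
      + 1 / ((real N + p) * (real N + p - 1)))" .
  also have "\<dots> = (real N - 1) * Gamma (p + 1) * ((real N * fact (N - 1)) / Gamma (real N + p + 1))
          + real N * (real N - 1) / ((real N + p) * (real N + p - 1))"
    by (simp add: algebra_simps)
  also have "real N * fact (N - 1) = Gamma (real N + 1)" using fN GN by simp
  finally show ?thesis by simp
qed

lemma alg_aux:
  fixes A B C D n n1 g :: real
  assumes "A \<noteq> 0" "B \<noteq> 0" "C \<noteq> 0" "D \<noteq> 0"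
  shows "n1 * g * (n * (n1 * A)) / (C * (D * B)) + n * n1 / (C * D) = n * (n1 * A) / (C * (D * B)) * (n1 * g + B / A)"
  using assms by (simp add: field_simps)

lemma closed_eq_statement:
  assumes p: "0 < p" "p < 1" and N: "N \<ge> 3"
  shows "(real N - 1) * Gamma (p + 1) * Gamma (real N + 1) / Gamma (real N + p + 1)
          + real N * (real N - 1) / ((real N + p) * (real N + p - 1))
       = Gamma (real N + 1) / Gamma (real N + p + 1) *
             ((real N - 1) * Gamma (p + 1) + Gamma (real N + p - 1) / Gamma (real N - 1))"
proof -
  define A where "A = Gamma (real N - 1)"
  define B where "B = Gamma (real N + p - 1)"
  have Npos: "real N - 1 > 0" "real N + p - 1 > 0" "real N + p > 0" "real N > 0" using N p by auto
  have A0: "A > 0" unfolding A_def using N by simp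
  have B0: "B > 0" unfolding B_def using N p by simp
  have GN1: "Gamma (real N + 1) = real N * ((real N - 1) * A)"
  proof -
    have "Gamma (real N + 1) = real N * Gamma (real N)" using Npos by (intro Gamma_plus1 not_npi) auto
    also have "Gamma (real N) = Gamma ((real N - 1) + 1)" by simp
    also have "\<dots> = (real N - 1) * A" unfolding A_def using Npos by (intro Gamma_plus1 not_npi) auto
    finally show ?thesis .
  qed
  have GNp: "Gamma (real N + p + 1) = (real N + p) * ((real N + p - 1) * B)"
  proof -
    have "Gamma (real N + p + 1) = (real N + p) * Gamma (real N + p)" using Npos by (intro Gamma_plus1 not_npi) auto
    also have "Gamma (real N + p) = Gamma ((real N + p - 1) + 1)" by simp
    also have "\<dots> = (real N + p - 1) * B" unfolding B_def using Npos by (intro Gamma_plus1 not_npi) auto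
    finally show ?thesis .
  qed
  show ?thesis
    unfolding GN1 GNp A_def[symmetric] B_def[symmetric]
    using alg_aux[of A B "real N + p" "real N + p - 1" "real N - 1" "Gamma (p + 1)" "real N"] Npos A0 B0 by simp
qed

lemma alg_aux2:
  fixes F P g c G n R :: real
  assumes "n \<noteq> 0" "c \<noteq> 0" "G \<noteq> 0"
  shows "F * P * g / (c * G) * ((n - 1) * c / n ^ 2) + P / n ^ 2 * R = P / n ^ 2 * ((n - 1) * g * F / G + R)"
  using assms by (simp add: field_simps)

lemma limit_part:
  assumes p: "0 < p" "p < 1"
  shows "(\<lambda>N. real N powr (p - 1) * expected_E N p) \<longlonglongrightarrow> Gamma (p + 1)"
proof -
  define a where "a N = Gamma_series (p + 1) N * ((real N - 1) * (real N + p + 1) / real N ^ 2)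
       + real N powr (p - 1) * (real N * (real N - 1) / ((real N + p) * (real N + p - 1)))" for N :: nat
  have ev: "eventually (\<lambda>N. a N = real N powr (p - 1) * expected_E N p) sequentially"
    using eventually_ge_at_top[of 3]
  proof eventually_elim
    case (elim N)
    have Npos: "real N > 0" using elim by simp
    have pg: "pochhammer (p + 1) (N + 1) = Gamma (p + 1 + real (N + 1)) / Gamma (p + 1)"
      using p by (intro pochhammer_Gamma not_npi) simp
    have G1: "Gamma (p + 1) > 0" using p by simp
    have G2: "Gamma (real N + p + 1) > 0" using p by simp
    have Gs: "Gamma (p + 1 + real (N + 1)) = (real N + p + 1) * Gamma (real N + p + 1)"
    proof -
      have "Gamma (p + 1 + real (N + 1)) = Gamma ((real N + p + 1) + 1)" by (simp add: add_ac)
      also have "\<dots> = (real N + p + 1) * Gamma (real N + p + 1)" using p by (intro Gamma_plus1 not_npi) simp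
      finally show ?thesis .
    qed
    have GN: "Gamma (real N + 1) = fact N"
      using Gamma_fact[of N, where 'a=real] by (simp add: add.commute)
    have ex: "exp ((p + 1) * of_real (ln (of_nat N))) = real N powr (p + 1)"
      using Npos by (simp add: powr_def mult.commute)
    have pw: "real N powr (p - 1) = real N powr (p + 1) / real N ^ 2"
    proof -
      have "real N powr (p + 1) = real N powr (p - 1 + 2)" by (rule arg_cong[where f="\<lambda>e. real N powr e"]) simp
      also have "\<dots> = real N powr (p - 1) * real N powr 2" by (rule powr_add)
      also have "real N powr 2 = real N ^ 2" using Npos by simp
      finally show ?thesis using Npos by simp
    qed
    have "Gamma_series (p + 1) N = fact N * real N powr (p + 1) * Gamma (p + 1) / ((real N + p + 1) * Gamma (real N + p + 1))"
      unfolding Gamma_series_def pg Gs ex using G1 G2 by (simp add: field_simps)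
    then have "a N = real N powr (p - 1) * ((real N - 1) * Gamma (p + 1) * Gamma (real N + 1) / Gamma (real N + p + 1)
          + real N * (real N - 1) / ((real N + p) * (real N + p - 1)))"
      unfolding a_def GN pw
      using alg_aux2[of "real N" "real N + p + 1" "Gamma (real N + p + 1)" "fact N" "real N powr (p + 1)" "Gamma (p + 1)"
          "real N * (real N - 1) / ((real N + p) * (real N + p - 1))"] Npos G2 p
      by simp
    also have "\<dots> = real N powr (p - 1) * expected_E N p" using expected_closed[OF p elim] by simp
    finally show ?case .
  qed
  have l1: "(\<lambda>N. (real N - 1) * (real N + p + 1) / real N ^ 2) \<longlonglongrightarrow> 1" by real_asymp
  have l2: "(\<lambda>N. real N * (real N - 1) / ((real N + p) * (real N + p - 1))) \<longlonglongrightarrow> 1" by real_asymp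
  have l3: "(\<lambda>N. real N powr (p - 1)) \<longlonglongrightarrow> 0"
    using p by (intro tendsto_neg_powr filterlim_real_sequentially) auto
  have "a \<longlonglongrightarrow> Gamma (p + 1) * 1 + 0 * 1"
    unfolding a_def by (intro tendsto_intros l1 l2 l3)
  then have "a \<longlonglongrightarrow> Gamma (p + 1)" by simp
  then show ?thesis using tendsto_cong[OF ev] by simp
qed

theorem mainTheorem12:
  fixes p :: real
  assumes "0 < p" and "p < 1"
  shows "(\<forall>N::nat. N \<ge> 3 \<longrightarrow>
           expected_E N p =
             Gamma (real N + 1) / Gamma (real N + p + 1) *
             ((real N - 1) * Gamma (p + 1) + Gamma (real N + p - 1) / Gamma (real N - 1)))
         \<and> (\<lambda>N. real N powr (p - 1) * expected_E N p) \<longlonglongrightarrow> Gamma (p + 1)"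
  using expected_closed[OF assms] closed_eq_statement[OF assms] limit_part[OF assms] by auto


end
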